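(* Let $\chi$ be a separable metric space with a $\sigma$-finite Borel measure $\Lambda$ of full support. Let $(f_n)_{n\ge1}\subseteq L^\infty(\Lambda)$ converge in $L^\infty(\Lambda)$ to $f$, and suppose each $f_n$ has a version $u_n$ that is bounded, non-negative and lower semicontinuous. Then $f$ has a bounded, non-negative, lower semicontinuous version $u$ which is maximal: every bounded, non-negative, lower semicontinuous version $\tilde u$ of $f$ satisfies $\tilde u(x)\le u(x)$ for all $x\in\chi$.
   Context: A version of an element of $L^\infty(\Lambda)$ is a Borel function agreeing with it $\Lambda$-almost everywhere. *)

theory Defs
  imports "HOL-Analysis.Analysis" "HOL-Probability.Essential_Supremum"
begin

definition lower_semicontinuous :: "('a::topological_space \<Rightarrow> real) \<Rightarrow> bool" where
  "lower_semicontinuous u \<longleftrightarrow> (\<forall>c. open {x. c < u x})"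

definition Linfty :: "'a measure \<Rightarrow> ('a \<Rightarrow> real) \<Rightarrow> bool" where
  "Linfty M f \<longleftrightarrow> f \<in> borel_measurable M \<and> esssup M (\<lambda>x. ereal \<bar>f x\<bar>) < \<infinity>"

definition Linfty_dist :: "'a measure \<Rightarrow> ('a \<Rightarrow> real) \<Rightarrow> ('a \<Rightarrow> real) \<Rightarrow> ereal" where
  "Linfty_dist M f g = esssup M (\<lambda>x. ereal \<bar>f x - g x\<bar>)"

definition is_version :: "'a measure \<Rightarrow> ('a \<Rightarrow> real) \<Rightarrow> ('a \<Rightarrow> real) \<Rightarrow> bool" where
  "is_version M u f \<longleftrightarrow> u \<in> borel_measurable M \<and> (AE x in M. u x = f x)"

end

theory Submission
  imports Defs
begin

definition goodr :: "'a::metric_space measure \<Rightarrow> ('a \<Rightarrow> real) \<Rightarrow> 'a \<Rightarrow> real \<Rightarrow> bool" where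
  "goodr M f x c \<longleftrightarrow> (\<exists>r>0. AE y in M. y \<in> ball x r \<longrightarrow> c \<le> f y)"

lemma le_of_approx:
  fixes t s c :: real
  assumes "\<And>k::nat. t \<le> s + c / real (Suc k)"
  shows "t \<le> s"
proof -
  have "(\<lambda>k. s + c * inverse (real (Suc k))) \<longlonglongrightarrow> s + c * 0"
    by (intro tendsto_intros LIMSEQ_inverse_real_of_nat)
  then have lim: "(\<lambda>k. s + c / real (Suc k)) \<longlonglongrightarrow> s" by (simp add: divide_inverse)
  show ?thesis
    by (rule LIMSEQ_le_const[OF lim]) (use assms in auto)
qed

theorem mainTheorem19:
  fixes M :: "'a::metric_space measure"
    and fs :: "nat \<Rightarrow> 'a \<Rightarrow> real" and f :: "'a \<Rightarrow> real"
    and us :: "nat \<Rightarrow> 'a \<Rightarrow> real"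
  assumes separable: "separable_space (euclidean :: 'a topology)"
    and borel_sets: "sets M = sets borel"
    and sigma_finite: "sigma_finite_measure M"
    and full_support: "\<And>U. open U \<Longrightarrow> U \<noteq> {} \<Longrightarrow> emeasure M U > 0"
    and fs_Linfty: "\<And>n. Linfty M (fs n)"
    and f_Linfty: "Linfty M f"
    and conv: "(\<lambda>n. Linfty_dist M (fs n) f) \<longlonglongrightarrow> 0"
    and us_version: "\<And>n. is_version M (us n) (fs n)"
    and us_bounded: "\<And>n. bounded (range (us n))"
    and us_nonneg: "\<And>n x. 0 \<le> us n x"
    and us_lsc: "\<And>n. lower_semicontinuous (us n)"
  shows "\<exists>u. is_version M u f \<and> bounded (range u) \<and> (\<forall>x. 0 \<le> u x) \<and> lower_semicontinuous u
           \<and> (\<forall>v. is_version M v f \<and> bounded (range v) \<and> (\<forall>x. 0 \<le> v x) \<and> lower_semicontinuous v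
                  \<longrightarrow> (\<forall>x. v x \<le> u x))"
proof -
  have spM: "space M = UNIV" using sets_eq_imp_space_eq[OF borel_sets] by simp
  have ballsets: "\<And>x r. ball x r \<in> sets M" using borel_sets by simp
  obtain K where K: "AE x in M. \<bar>f x\<bar> \<le> K"
  proof -
    let ?E = "esssup M (\<lambda>x. ereal \<bar>f x\<bar>)"
    have "?E < \<infinity>" using f_Linfty by (simp add: Linfty_def)
    then obtain K where EK: "?E \<le> ereal K" by (cases ?E) auto
    have "AE x in M. ereal \<bar>f x\<bar> \<le> ?E" by (rule esssup_AE)
    then have "AE x in M. \<bar>f x\<bar> \<le> K" by eventually_elim (metis EK ereal_less_eq(3) order.trans)
    then show thesis by (rule that)
  qed
  have ball_ne: "\<not> (AE y in M. y \<notin> ball x r)" if r: "r > 0" for x and r :: real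
  proof
    assume ae: "AE y in M. y \<notin> ball x r"
    have "emeasure M (ball x r) = 0"
      using AE_iff_measurable[OF ballsets[of x r], of "\<lambda>y. y \<notin> ball x r"] ae spM by (simp add: ball_def)
    with full_support[of "ball x r"] r show False by auto
  qed
  have good_le: "c \<le> K" if "goodr M f x c" for x c
  proof -
    from that obtain r where r: "r>0" "AE y in M. y \<in> ball x r \<longrightarrow> c \<le> f y"
      by (auto simp: goodr_def)
    show "c \<le> K"
    proof (rule ccontr)
      assume nc: "\<not> c \<le> K"
      have "AE y in M. y \<notin> ball x r" using r(2) K by eventually_elim (use nc in auto)
      with ball_ne r(1) show False by auto
    qed
  qed
  have approx: "\<exists>n. AE x in M. \<bar>us n x - f x\<bar> < e" if e: "e > 0" for e :: real
  proof -
    have "eventually (\<lambda>n. Linfty_dist M (fs n) f < ereal e) sequentially"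
      using order_tendstoD(2)[OF conv] e by auto
    then obtain n where n: "Linfty_dist M (fs n) f < ereal e"
      by (auto simp: eventually_sequentially)
    have "AE x in M. ereal \<bar>fs n x - f x\<bar> \<le> Linfty_dist M (fs n) f"
      unfolding Linfty_dist_def by (rule esssup_AE)
    moreover have "AE x in M. us n x = fs n x" using us_version by (auto simp: is_version_def)
    ultimately have "AE x in M. \<bar>us n x - f x\<bar> < e"
      by eventually_elim (metis n ereal_less_eq(3) le_less_trans less_ereal.simps(1))
    then show ?thesis by blast
  qed
  have fnn: "AE x in M. 0 \<le> f x"
  proof -
    have "\<forall>k::nat. AE x in M. 0 \<le> f x + 1 / real (Suc k)"
    proof
      fix k :: nat
      obtain n where n: "AE x in M. \<bar>us n x - f x\<bar> < 1 / real (Suc k)"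
        using approx[of "1 / real (Suc k)"] by auto
      show "AE x in M. 0 \<le> f x + 1 / real (Suc k)"
        using n by eventually_elim (use us_nonneg in \<open>smt (verit)\<close>)
    qed
    then have "AE x in M. \<forall>k::nat. 0 \<le> f x + 1 / real (Suc k)" by (simp add: AE_all_countable)
    then show ?thesis by eventually_elim (rule le_of_approx, auto)
  qed
  define S where "S x = {c. goodr M f x c}" for x
  define u where "u x = Sup (S x)" for x
  have S_ne: "0 \<in> S x" for x
    unfolding S_def goodr_def
    using fnn by (auto intro!: exI[of _ 1] elim!: eventually_mono)
  have S_bdd: "bdd_above (S x)" for x using good_le by (auto simp: bdd_above_def S_def)
  have less_u: "c < u x \<longleftrightarrow> (\<exists>d\<in>S x. c < d)" for c x
    unfolding u_def using less_cSup_iff[of "S x" c] S_ne[of x] S_bdd[of x] by auto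
  have less_u_good: "goodr M f x c" if "c < u x" for c x
  proof -
    from that less_u obtain d where d: "d \<in> S x" "c < d" by auto
    then obtain r where r: "r > 0" "AE y in M. y \<in> ball x r \<longrightarrow> d \<le> f y"
      by (auto simp: S_def goodr_def)
    have "AE y in M. y \<in> ball x r \<longrightarrow> c \<le> f y" using r(2) by eventually_elim (use d(2) in auto)
    then show ?thesis using r(1) by (auto simp: goodr_def)
  qed
  have u_ge: "g x \<le> u x" if lsc: "lower_semicontinuous g" and ae: "AE y in M. g y \<le> f y" for g x
  proof (rule dense_le)
    fix c assume c: "c < g x"
    have "open {y. c < g y}" using lsc by (auto simp: lower_semicontinuous_def)
    then obtain r where r: "r>0" "ball x r \<subseteq> {y. c < g y}" using c
      by (auto simp: open_contains_ball)
    have "AE y in M. y \<in> ball x r \<longrightarrow> c \<le> f y" using ae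
      by eventually_elim (use r in auto)
    then have "c \<in> S x" using r(1) by (auto simp: S_def goodr_def)
    then show "c \<le> u x" unfolding u_def using S_bdd by (rule cSup_upper)
  qed
  have u_nn: "0 \<le> u x" for x unfolding u_def using S_ne S_bdd by (rule cSup_upper)
  have u_K: "u x \<le> K" for x unfolding u_def
    using S_ne good_le by (intro cSup_least) (auto simp: S_def)
  have u_lsc: "lower_semicontinuous u"
    unfolding lower_semicontinuous_def
  proof
    fix c
    show "open {x. c < u x}"
      unfolding open_contains_ball
    proof
      fix x assume "x \<in> {x. c < u x}"
      then obtain d where d: "d \<in> S x" "c < d" using less_u by auto
      then obtain r where r: "r>0" "AE y in M. y \<in> ball x r \<longrightarrow> d \<le> f y"
        by (auto simp: S_def goodr_def)
      have "ball x (r/2) \<subseteq> {x. c < u x}"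
      proof
        fix z assume z: "z \<in> ball x (r/2)"
        have sub: "ball z (r/2) \<subseteq> ball x r"
        proof
          fix y assume "y \<in> ball z (r/2)"
          then show "y \<in> ball x r" using z dist_triangle[of x y z] by simp
        qed
        have "AE y in M. y \<in> ball z (r/2) \<longrightarrow> d \<le> f y"
          using r(2) by eventually_elim (use sub in auto)
        then have "d \<in> S z" using r(1) by (auto simp: S_def goodr_def intro!: exI[of _ "r/2"])
        then show "z \<in> {x. c < u x}" using less_u d(2) by auto
      qed
      then show "\<exists>e>0. ball x e \<subseteq> {x. c < u x}" using r(1) by (intro exI[of _ "r/2"]) auto
    qed
  qed
  have u_meas: "u \<in> borel_measurable M"
    unfolding borel_measurable_iff_greater spM
    using u_lsc borel_sets by (auto simp: lower_semicontinuous_def)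
  have f_le_u: "AE x in M. f x \<le> u x"
  proof -
    have "\<forall>k::nat. AE x in M. f x \<le> u x + 2 / real (Suc k)"
    proof
      fix k :: nat
      define e where "e = 1 / real (Suc k)"
      have e: "e > 0" by (simp add: e_def)
      obtain n where n: "AE x in M. \<bar>us n x - f x\<bar> < e" using approx[OF e] by auto
      have "{x. c < us n x - e} = {x. c + e < us n x}" for c by auto
      then have lsc: "lower_semicontinuous (\<lambda>x. us n x - e)"
        using us_lsc[of n] by (simp add: lower_semicontinuous_def)
      have "AE y in M. us n y - e \<le> f y" using n by eventually_elim auto
      then have le: "us n x - e \<le> u x" for x using u_ge[OF lsc] by blast
      show "AE x in M. f x \<le> u x + 2 / real (Suc k)"
        using n
      proof eventually_elim
        case (elim x)
        have "2 / real (Suc k) = 2 * e" by (simp add: e_def)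
        then show ?case using elim le[of x] by linarith
      qed
    qed
    then have "AE x in M. \<forall>k::nat. f x \<le> u x + 2 / real (Suc k)" by (simp add: AE_all_countable)
    then show ?thesis by eventually_elim (rule le_of_approx, auto)
  qed
  obtain D :: "'a set" where D: "countable D" "closure D = UNIV"
    using separable by (auto simp: separable_space_def)
  have dense: "\<exists>d\<in>D. dist x d < e" if "e > 0" for x e
    using closure_approachableD[of x D e] D(2) that by auto
  have key: "AE x in M. goodr M f x c \<longrightarrow> c \<le> f x" for c
  proof -
    define B where "B = {(d,q). d \<in> D \<and> q \<in> \<rat> \<and> q > 0 \<and> (AE y in M. y \<in> ball d q \<longrightarrow> c \<le> f y)}"
    have "B \<subseteq> D \<times> \<rat>" by (auto simp: B_def)
    moreover have "countable (D \<times> \<rat>)" using D(1) countable_rat by blast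
    ultimately have cB: "countable B" by (rule countable_subset)
    have "AE x in M. \<forall>p\<in>B. x \<in> ball (fst p) (snd p) \<longrightarrow> c \<le> f x"
      using cB by (subst AE_ball_countable) (auto simp: B_def)
    then show ?thesis
    proof eventually_elim
      case (elim x)
      show ?case
      proof
        assume "goodr M f x c"
        then obtain r where r: "r>0" "AE y in M. y \<in> ball x r \<longrightarrow> c \<le> f y"
          by (auto simp: goodr_def)
        obtain d where d: "d \<in> D" "dist x d < r/3" using dense[of "r/3"] r(1) by auto
        obtain q where q: "q \<in> \<rat>" "r/3 < q" "q < 2*r/3" using Rats_dense_in_real[of "r/3" "2*r/3"] r(1) by auto
        have sub: "ball d q \<subseteq> ball x r"
        proof
          fix y assume "y \<in> ball d q"
          then show "y \<in> ball x r" using d q dist_triangle[of x y d] by simp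
        qed
        have "AE y in M. y \<in> ball d q \<longrightarrow> c \<le> f y" using r(2) by eventually_elim (use sub in auto)
        then have "(d,q) \<in> B" using d q r(1) by (auto simp: B_def)
        moreover have "x \<in> ball d q" using d q by (simp add: dist_commute)
        ultimately show "c \<le> f x" using bspec[OF elim, of "(d,q)"] by simp
      qed
    qed
  qed
  have u_le_f: "AE x in M. u x \<le> f x"
  proof -
    have "AE x in M. \<forall>c\<in>\<rat>. goodr M f x c \<longrightarrow> c \<le> f x"
      using key by (subst AE_ball_countable) (auto simp: countable_rat)
    then show ?thesis
    proof eventually_elim
      case (elim x)
      show ?case
      proof (rule ccontr)
        assume "\<not> u x \<le> f x"
        then obtain c where c: "c\<in>\<rat>" "f x < c" "c < u x" using Rats_dense_in_real[of "f x" "u x"] by auto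
        have "goodr M f x c" using less_u_good c(3) .
        with elim c show False by auto
      qed
    qed
  qed
  have uv: "is_version M u f" unfolding is_version_def
    using u_meas f_le_u u_le_f by (auto elim: AE_mp)
  have ub: "bounded (range u)" unfolding bounded_iff using u_nn u_K
    by (intro exI[of _ K]) auto
  have umax: "v x \<le> u x" if v: "is_version M v f" "lower_semicontinuous v" for v x
  proof -
    have "AE y in M. v y \<le> f y" using v(1) by (auto simp: is_version_def elim: AE_mp)
    then show ?thesis using u_ge[OF v(2)] by blast
  qed
  show ?thesis
    using uv ub u_nn u_lsc umax by blast
qed

end
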